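(* Let $d\geq 2$ and $1\leq d_1<d$ be integers, let $\mathbb{T}$ be the rooted $d$-ary tree and $\tilde{\mathbb{T}}$ its left-most $d_1$-regular subtree with the same root. Assign potential $u\in\mathbb{R}$ to every vertex of $\tilde{\mathbb{T}}$ other than the root and potential $0$ to every vertex of $\mathbb{T}\setminus\tilde{\mathbb{T}}$. For $\beta\geq 0$ let \[Z^{Det}_n(\beta,u)=\sum_{W}\exp\Big(\beta \sum_{y\in W\setminus\{\mathbf 0\}} U(y)\Big),\] where the sum is over all directed paths $W$ from the root $\mathbf 0$ to a vertex of generation $n$, and $U(y)$ is the potential of $y$. Then for any $\beta\geq 0$ and $u\in\mathbb{R}$, the limit $f^{Det}(\beta,u):=\lim_{n\to\infty}\frac1n\log Z^{Det}_n(\beta,u)$ exists and \[ f^{Det}(\beta,u)=\max\{\beta u+\log d_1,\ \log d\},\] and hence the critical curve $u^{Det}_c(\beta):=\inf\{u\in\mathbb{R}: f^{Det}(\beta,u)>\log d\}$ equals \[ u^{Det}_c(\beta)=\frac{\log(d/d_1)}{\beta}.\]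
   Context: The nodes of the rooted $d$-ary tree $\mathbb{T}$ are labeled $(k,j)$, $k\geq 0$ the generation and $1\leq j\leq d^k$; the root is $\mathbf 0=(0,1)$, and the offspring of $(k,j)$ are $(k+1,(j-1)d+\ell)$, $1\leq \ell\leq d$. The left-most $d_1$-regular subtree $\tilde{\mathbb{T}}$ contains the root, and for each $x=(k,j)\in\tilde{\mathbb{T}}$ its children in $\tilde{\mathbb{T}}$ are $(k+1,d(j-1)+\ell)$ for $1\leq \ell\leq d_1$. A directed path from the root to generation $n$ is a sequence $\mathbf 0=w(0),w(1),\dots,w(n)$ with each $w(m+1)$ a child of $w(m)$. *)

theory Defs
  imports "HOL-Analysis.Analysis"
begin

type_synonym node = "nat \<times> nat"  (* (generation k, position j), 1 <= j <= d^k *)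

definition root :: node where "root = (0, 1)"

definition is_child :: "nat \<Rightarrow> node \<Rightarrow> node \<Rightarrow> bool" where
  "is_child d x y \<longleftrightarrow> fst y = fst x + 1 \<and>
     (\<exists>l\<in>{1..d}. snd y = (snd x - 1) * d + l)"

inductive_set subtree :: "nat \<Rightarrow> nat \<Rightarrow> node set" for d d1 where
  root_in: "root \<in> subtree d d1"
| child_in: "(k, j) \<in> subtree d d1 \<Longrightarrow> l \<in> {1..d1} \<Longrightarrow>
      (k + 1, d * (j - 1) + l) \<in> subtree d d1"

definition dpaths :: "nat \<Rightarrow> nat \<Rightarrow> node list set" where
  "dpaths d n = {ws. length ws = n + 1 \<and> ws ! 0 = root \<and>
      (\<forall>m<n. is_child d (ws ! m) (ws ! (m + 1)))}"

definition potential :: "nat \<Rightarrow> nat \<Rightarrow> real \<Rightarrow> node \<Rightarrow> real" where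
  "potential d d1 u y = (if y \<in> subtree d d1 \<and> y \<noteq> root then u else 0)"

text \<open>Sum over the vertices of W other than the root (vertices of a path are
  distinct, lying in distinct generations, so summing over positions 1..n is the
  same as summing over the set W minus root).\<close>
definition ZDet :: "nat \<Rightarrow> nat \<Rightarrow> real \<Rightarrow> real \<Rightarrow> nat \<Rightarrow> real" where
  "ZDet d d1 \<beta> u n = (\<Sum>ws\<in>dpaths d n.
      exp (\<beta> * (\<Sum>m\<in>{1..n}. potential d d1 u (ws ! m))))"

definition fDet :: "nat \<Rightarrow> nat \<Rightarrow> real \<Rightarrow> real \<Rightarrow> real" where
  "fDet d d1 \<beta> u = lim (\<lambda>n. ln (ZDet d d1 \<beta> u n) / real n)"

text \<open>Critical curve, as an extended real (inf of the empty set is +infinity)\<close>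
definition ucDet :: "nat \<Rightarrow> nat \<Rightarrow> real \<Rightarrow> ereal" where
  "ucDet d d1 \<beta> = Inf (ereal ` {u. fDet d d1 \<beta> u > ln (real d)})"

end

theory Submission
  imports Defs
begin

definition ch :: "nat \<Rightarrow> node \<Rightarrow> nat \<Rightarrow> node" where
  "ch d x l = (fst x + 1, (snd x - 1) * d + l)"

lemma is_child_ch: "is_child d x y \<longleftrightarrow> (\<exists>l\<in>{1..d}. y = ch d x l)"
  unfolding is_child_def ch_def by (cases y) auto

lemma sub_pos: "x \<in> subtree d d1 \<Longrightarrow> snd x \<ge> 1"
  by (induction rule: subtree.induct) (auto simp: root_def)

lemma divmod_uniq:
  fixes r r' q q' d :: nat
  assumes "r < d" "r' < d" "d*q + r = d*q' + r'"
  shows "q = q' \<and> r = r'"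
proof -
  have d: "d > 0" using assms by simp
  have "(r + d*q) div d = (r' + d*q') div d" "(r + d*q) mod d = (r' + d*q') mod d"
    using assms(3) by (simp_all add: add.commute)
  then show ?thesis using assms by simp
qed

lemma child_sub:
  assumes "snd x \<ge> 1" "1 \<le> l" "l \<le> d" "d1 \<le> d"
  shows "ch d x l \<in> subtree d d1 \<longleftrightarrow> x \<in> subtree d d1 \<and> l \<le> d1"
proof
  assume "x \<in> subtree d d1 \<and> l \<le> d1"
  then show "ch d x l \<in> subtree d d1"
    using subtree.child_in[of "fst x" "snd x" d d1 l] assms
    by (auto simp: ch_def mult.commute)
next
  assume "ch d x l \<in> subtree d d1"
  then show "x \<in> subtree d d1 \<and> l \<le> d1"
  proof (cases rule: subtree.cases)
    case root_in then show ?thesis by (simp add: ch_def root_def)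
  next
    case (child_in k j l')
    have j1: "j \<ge> 1" using sub_pos[OF child_in(2)] by simp
    have e: "d*(snd x - 1) + (l - 1) = d*(j-1) + (l' - 1)"
      using child_in(1) assms child_in(3) by (auto simp: ch_def mult.commute)
    have "snd x - 1 = j - 1 \<and> l - 1 = l' - 1"
      by (rule divmod_uniq[OF _ _ e]) (use assms child_in(3) in auto)
    then have "snd x = j" "l = l'" using assms j1 child_in(3) by auto
    moreover have "fst x = k" using child_in(1) by (simp add: ch_def)
    ultimately show ?thesis using child_in by (cases x) auto
  qed
qed

lemma dpaths_0: "dpaths d 0 = {[root]}"
  unfolding dpaths_def by (auto simp: length_Suc_conv)

lemma dpaths_Suc: "dpaths d (Suc n) = (\<lambda>(ws,l). ws @ [ch d (ws!n) l]) ` (dpaths d n \<times> {1..d})"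
proof (rule set_eqI, rule iffI)
  fix ws' assume a: "ws' \<in> dpaths d (Suc n)"
  define ws where "ws = take (n+1) ws'"
  have len: "length ws' = n + 2" and r: "ws' ! 0 = root"
    and c: "\<forall>m<Suc n. is_child d (ws' ! m) (ws' ! (m + 1))" using a by (auto simp: dpaths_def)
  have ws'eq: "ws' = ws @ [ws' ! Suc n]" unfolding ws_def using len
    by (metis Suc_eq_plus1 add_2_eq_Suc' lessI take_Suc_conv_app_nth take_all_iff order_refl)
  have "ws \<in> dpaths d n" unfolding dpaths_def ws_def using len r c by auto
  moreover obtain l where l: "l \<in> {1..d}" "ws' ! Suc n = ch d (ws' ! n) l"
    using c[rule_format, of n] by (auto simp: is_child_ch)
  moreover have "ws ! n = ws' ! n" unfolding ws_def by simp
  ultimately show "ws' \<in> (\<lambda>(ws,l). ws @ [ch d (ws!n) l]) ` (dpaths d n \<times> {1..d})"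
    using ws'eq by (intro image_eqI[of _ _ "(ws,l)"]) auto
next
  fix ws' assume "ws' \<in> (\<lambda>(ws,l). ws @ [ch d (ws!n) l]) ` (dpaths d n \<times> {1..d})"
  then obtain ws l where ws: "ws \<in> dpaths d n" and l: "l \<in> {1..d}" and e: "ws' = ws @ [ch d (ws!n) l]"
    by auto
  have len: "length ws = n+1" and r: "ws ! 0 = root"
    and c: "\<forall>m<n. is_child d (ws ! m) (ws ! (m + 1))" using ws by (auto simp: dpaths_def)
  have "\<forall>m<Suc n. is_child d (ws' ! m) (ws' ! (m + 1))"
  proof (intro allI impI)
    fix m assume m: "m < Suc n"
    show "is_child d (ws' ! m) (ws' ! (m + 1))"
    proof (cases "m = n")
      case True then show ?thesis using e len l by (auto simp: nth_append is_child_ch)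
    next
      case False then show ?thesis using e len c m by (auto simp: nth_append)
    qed
  qed
  then show "ws' \<in> dpaths d (Suc n)" using e len r by (auto simp: dpaths_def nth_append)
qed

lemma dpaths_inj: "inj_on (\<lambda>(ws,l). ws @ [ch d (ws!n) l]) (dpaths d n \<times> {1..d})"
  by (auto simp: inj_on_def ch_def)

lemma dpaths_finite: "finite (dpaths d n)"
  by (induction n) (auto simp: dpaths_0 dpaths_Suc)

lemma dpaths_pos: "ws \<in> dpaths d n \<Longrightarrow> snd (ws ! n) \<ge> 1"
proof (induction n arbitrary: ws)
  case 0 then show ?case by (auto simp: dpaths_0 root_def)
next
  case (Suc n)
  then obtain v l where "v \<in> dpaths d n" "l \<in> {1..d}" "ws = v @ [ch d (v!n) l]"
    by (auto simp: dpaths_Suc)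
  moreover have "length v = n+1" using calculation by (auto simp: dpaths_def)
  ultimately show ?case by (auto simp: ch_def nth_append)
qed

lemma sum_dpaths_Suc:
  "(\<Sum>ws\<in>dpaths d (Suc n). f ws) = (\<Sum>ws\<in>dpaths d n. \<Sum>l\<in>{1..d}. f (ws @ [ch d (ws!n) l]))"
  unfolding dpaths_Suc
  by (subst sum.reindex[OF dpaths_inj]) (simp add: sum.cartesian_product split_def)

definition Wt :: "nat \<Rightarrow> nat \<Rightarrow> real \<Rightarrow> real \<Rightarrow> nat \<Rightarrow> node list \<Rightarrow> real" where
  "Wt d d1 \<beta> u n ws = exp (\<beta> * (\<Sum>m\<in>{1..n}. potential d d1 u (ws ! m)))"

lemma Wt_Suc: "length ws = n + 1 \<Longrightarrow>
  Wt d d1 \<beta> u (Suc n) (ws @ [c]) = Wt d d1 \<beta> u n ws * exp (\<beta> * potential d d1 u c)"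
proof -
  assume len: "length ws = n + 1"
  have "(\<Sum>m\<in>{1..Suc n}. potential d d1 u ((ws @ [c]) ! m))
      = (\<Sum>m\<in>{1..n}. potential d d1 u (ws ! m)) + potential d d1 u c"
    using len by (simp add: nth_append)
  then show ?thesis unfolding Wt_def by (simp add: distrib_left exp_add)
qed

definition Aw where
  "Aw d d1 \<beta> u n = (\<Sum>ws\<in>dpaths d n. if ws ! n \<in> subtree d d1 then Wt d d1 \<beta> u n ws else 0)"
definition Bw where
  "Bw d d1 \<beta> u n = (\<Sum>ws\<in>dpaths d n. if ws ! n \<in> subtree d d1 then 0 else Wt d d1 \<beta> u n ws)"

lemma Z_AB: "ZDet d d1 \<beta> u n = Aw d d1 \<beta> u n + Bw d d1 \<beta> u n"
  unfolding ZDet_def Aw_def Bw_def Wt_def by (subst sum.distrib[symmetric]) (rule sum.cong, auto)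

lemma sum_if_le:
  assumes "d1 \<le> d"
  shows "(\<Sum>l\<in>{1..d}. if l \<le> d1 then (x::real) else y) = real d1 * x + real (d - d1) * y"
proof -
  have "{1..d} \<inter> {l. l \<le> d1} = {1..d1}" using assms by auto
  moreover have "{1..d} \<inter> - {l. l \<le> d1} = {d1<..d}" using assms by auto
  ultimately show ?thesis by (simp add: sum.If_cases)
qed

lemma ch_not_root: "ch d x l \<noteq> root" by (simp add: ch_def root_def)

lemma AB_Suc:
  assumes "d1 \<le> d"
  shows "Aw d d1 \<beta> u (Suc n) = real d1 * exp (\<beta> * u) * Aw d d1 \<beta> u n"
    "Bw d d1 \<beta> u (Suc n) = real (d - d1) * Aw d d1 \<beta> u n + real d * Bw d d1 \<beta> u n"
proof -
  have key: "\<And>ws l. ws \<in> dpaths d n \<Longrightarrow> l \<in> {1..d} \<Longrightarrow>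
     (ws @ [ch d (ws!n) l]) ! Suc n = ch d (ws!n) l \<and>
     Wt d d1 \<beta> u (Suc n) (ws @ [ch d (ws!n) l]) = Wt d d1 \<beta> u n ws *
        exp (\<beta> * potential d d1 u (ch d (ws!n) l)) \<and>
     (ch d (ws!n) l \<in> subtree d d1 \<longleftrightarrow> ws!n \<in> subtree d d1 \<and> l \<le> d1)"
  proof -
    fix ws l assume ws: "ws \<in> dpaths d n" and l: "l \<in> {1..d}"
    have len: "length ws = n+1" using ws by (simp add: dpaths_def)
    show "?thesis ws l"
      using Wt_Suc[OF len] child_sub[OF dpaths_pos[OF ws], of l d d1] l assms len
      by (auto simp: nth_append)
  qed
  have "Aw d d1 \<beta> u (Suc n) = (\<Sum>ws\<in>dpaths d n. \<Sum>l\<in>{1..d}.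
      if l \<le> d1 then (if ws!n \<in> subtree d d1 then Wt d d1 \<beta> u n ws * exp (\<beta> * u) else 0) else 0)"
    unfolding Aw_def sum_dpaths_Suc
    by (intro sum.cong refl) (auto simp: key potential_def ch_not_root)
  also have "\<dots> = real d1 * exp (\<beta> * u) * Aw d d1 \<beta> u n"
    unfolding Aw_def sum_if_le[OF assms] by (simp add: sum_distrib_left) (intro sum.cong refl, auto)
  finally show "Aw d d1 \<beta> u (Suc n) = real d1 * exp (\<beta> * u) * Aw d d1 \<beta> u n" .
  have "Bw d d1 \<beta> u (Suc n) = (\<Sum>ws\<in>dpaths d n. \<Sum>l\<in>{1..d}.
      if l \<le> d1 then (if ws!n \<in> subtree d d1 then 0 else Wt d d1 \<beta> u n ws) else Wt d d1 \<beta> u n ws)"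
    unfolding Bw_def sum_dpaths_Suc
    by (intro sum.cong refl) (auto simp: key potential_def ch_not_root)
  also have "\<dots> = real (d - d1) * Aw d d1 \<beta> u n + real d * Bw d d1 \<beta> u n"
    unfolding Aw_def Bw_def sum_if_le[OF assms]
    using assms by (simp add: sum_distrib_left sum.distrib[symmetric]) (intro sum.cong refl, auto simp: algebra_simps of_nat_diff)
  finally show "Bw d d1 \<beta> u (Suc n) = real (d - d1) * Aw d d1 \<beta> u n + real d * Bw d d1 \<beta> u n" .
qed

lemma A0: "Aw d d1 \<beta> u 0 = 1" and B0: "Bw d d1 \<beta> u 0 = 0"
  by (auto simp: Aw_def Bw_def Wt_def dpaths_0 subtree.root_in)

lemma A_pow: "d1 \<le> d \<Longrightarrow> Aw d d1 \<beta> u n = (real d1 * exp (\<beta> * u)) ^ n"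
  by (induction n) (simp_all add: A0 AB_Suc)

lemma B_nonneg: "Bw d d1 \<beta> u n \<ge> 0"
  unfolding Bw_def Wt_def by (intro sum_nonneg) auto

lemma B_lower:
  assumes dd: "d1 < d" and n1: "1 \<le> n"
  shows "Bw d d1 \<beta> u n \<ge> real d ^ (n - 1)"
  using n1
proof (induction n rule: dec_induct)
  case base
  have "Bw d d1 \<beta> u 1 = real (d - d1)"
    using AB_Suc(2)[of d1 d \<beta> u 0] dd by (simp add: A0 B0)
  then show ?case using dd by simp
next
  case (step n)
  have "Bw d d1 \<beta> u (Suc n) \<ge> real d * Bw d d1 \<beta> u n"
    using AB_Suc(2)[of d1 d \<beta> u n] A_pow[of d1 d \<beta> u n] dd by simp
  moreover have "real d * Bw d d1 \<beta> u n \<ge> real d * real d ^ (n-1)"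
    using step by (intro mult_left_mono) auto
  moreover have "real d * real d ^ (n-1) = real d ^ (Suc n - 1)"
    using step by (cases n) auto
  ultimately show ?case by simp
qed

lemma B_upper:
  assumes "d1 < d" "M \<ge> real d1 * exp (\<beta> * u)" "M \<ge> real d"
  shows "Bw d d1 \<beta> u n \<le> real n * M ^ n"
proof (induction n)
  case 0 then show ?case by (simp add: B0)
next
  case (Suc n)
  let ?a = "real d1 * exp (\<beta> * u)"
  have a0: "?a \<ge> 0" by simp
  have aM: "?a ^ n \<le> M ^ n" using assms by (intro power_mono) auto
  have d0: "real (d - d1) \<le> real d" by simp
  have "real (d - d1) * ?a ^ n \<le> real d * M ^ n"
    by (intro mult_mono aM d0) auto
  also have "\<dots> \<le> M * M ^ n" using assms(3) by (intro mult_right_mono) (use assms in auto)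
  finally have t1: "real (d - d1) * ?a ^ n \<le> M ^ Suc n" by simp
  have "real d * Bw d d1 \<beta> u n \<le> M * (real n * M ^ n)"
    using Suc B_nonneg[of d d1 \<beta> u n] assms(3) by (intro mult_mono) auto
  then have t2: "real d * Bw d d1 \<beta> u n \<le> real n * M ^ Suc n" by (simp add: algebra_simps)
  show ?case using AB_Suc(2)[of d1 d \<beta> u n] A_pow[of d1 d \<beta> u n] assms t1 t2
    by (simp add: algebra_simps)
qed

lemma main_limit:
  assumes d: "d \<ge> 2" and d1: "1 \<le> d1" "d1 < d"
  shows "(\<lambda>n. ln (ZDet d d1 \<beta> u n) / real n) \<longlonglongrightarrow> max (\<beta> * u + ln (real d1)) (ln (real d))"
proof -
  define a where "a = real d1 * exp (\<beta> * u)"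
  define M where "M = max a (real d)"
  have a0: "a > 0" using d1 by (simp add: a_def)
  have M0: "M \<ge> real d" "M \<ge> a" "M > 0" using d by (auto simp: M_def)
  have lnM: "ln M = max (\<beta> * u + ln (real d1)) (ln (real d))"
  proof -
    have "ln a = \<beta> * u + ln (real d1)" using d1 by (simp add: a_def ln_mult)
    moreover have "ln M = max (ln a) (ln (real d))" using a0 d by (simp add: M_def max_def)
    ultimately show ?thesis by simp
  qed
  have Z: "ZDet d d1 \<beta> u n = a ^ n + Bw d d1 \<beta> u n" for n
    using Z_AB A_pow d1 by (simp add: a_def)
  have up: "ln (ZDet d d1 \<beta> u n) / real n \<le> ln M + (ln 2 + ln (real n)) / real n" if n: "n \<ge> 1" for n
  proof -
    have Zp: "ZDet d d1 \<beta> u n > 0" using Z a0 B_nonneg[of d d1 \<beta> u n] by (simp add: add_pos_nonneg)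
    have b1: "Bw d d1 \<beta> u n \<le> real n * M ^ n"
      by (rule B_upper) (use d1 M0 in \<open>auto simp: a_def\<close>)
    have b2: "a ^ n \<le> M ^ n" by (rule power_mono) (use M0 a0 in auto)
    have "ZDet d d1 \<beta> u n \<le> M ^ n + real n * M ^ n"
      unfolding Z using b1 b2 by linarith
    also have "\<dots> = (real n + 1) * M ^ n" by (simp add: algebra_simps)
    also have "\<dots> \<le> (2 * real n) * M ^ n"
      using n M0 by (intro mult_right_mono) auto
    finally have "ln (ZDet d d1 \<beta> u n) \<le> ln ((2 * real n) * M ^ n)" using Zp by simp
    also have "\<dots> = ln 2 + ln (real n) + real n * ln M" using M0 n by (simp add: ln_mult ln_realpow)
    finally show ?thesis using n by (simp add: divide_simps algebra_simps)
  qed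
  have lo: "ln M - ln (real d) / real n \<le> ln (ZDet d d1 \<beta> u n) / real n" if n: "n \<ge> 1" for n
  proof -
    have "ZDet d d1 \<beta> u n \<ge> M ^ n / real d"
    proof (cases "a \<ge> real d")
      case True
      then have "M = a" by (simp add: M_def)
      moreover have "a ^ n / real d \<le> a ^ n" using d a0 by (simp add: divide_simps)
      ultimately show ?thesis using Z B_nonneg[of d d1 \<beta> u n] by simp
    next
      case False
      then have "M = real d" by (simp add: M_def)
      moreover have "real d ^ n / real d = real d ^ (n - 1)" using n d
        by (cases n) auto
      ultimately show ?thesis using Z B_lower[of d1 d n \<beta> u] d1 n a0 by (simp add: add_increasing)
    qed
    moreover have "M ^ n / real d > 0" using M0 d by simp
    ultimately have "ln (M ^ n / real d) \<le> ln (ZDet d d1 \<beta> u n)" by simp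
    moreover have "ln (M ^ n / real d) = real n * ln M - ln (real d)"
      using M0 d by (simp add: ln_div ln_realpow)
    ultimately have h: "real n * ln M - ln (real d) \<le> ln (ZDet d d1 \<beta> u n)" by linarith
    have "ln M - ln (real d) / real n = (real n * ln M - ln (real d)) / real n"
      using n by (simp add: field_simps)
    then show ?thesis using divide_right_mono[OF h, of "real n"] by simp
  qed
  have l1: "(\<lambda>n. ln M - ln (real d) / real n) \<longlonglongrightarrow> ln M"
    using tendsto_diff[OF tendsto_const lim_const_over_n[of "ln (real d)"]] by simp
  have "(\<lambda>n::nat. ln 2 / real n + ln (real n) / real n) \<longlonglongrightarrow> 0 + 0"
    by (intro tendsto_add lim_const_over_n lim_ln_over_n)
  then have "(\<lambda>n::nat. (ln 2 + ln (real n)) / real n) \<longlonglongrightarrow> 0"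
    by (simp add: add_divide_distrib)
  then have l2: "(\<lambda>n. ln M + (ln 2 + ln (real n)) / real n) \<longlonglongrightarrow> ln M"
    using tendsto_add[OF tendsto_const, of _ 0 sequentially "ln M"] by simp
  have ev: "eventually (\<lambda>n. n \<ge> 1) sequentially" by (simp add: eventually_ge_at_top)
  have "(\<lambda>n. ln (ZDet d d1 \<beta> u n) / real n) \<longlonglongrightarrow> ln M"
    by (rule tendsto_sandwich[OF eventually_mono[OF ev lo] eventually_mono[OF ev up] l1 l2]) auto
  then show ?thesis using lnM by simp
qed

theorem theorem1p1:
  fixes d d1 :: nat
  assumes "d \<ge> 2" and "1 \<le> d1" and "d1 < d"
  shows "(\<forall>\<beta> u. \<beta> \<ge> 0 \<longrightarrow>
            ((\<lambda>n. ln (ZDet d d1 \<beta> u n) / real n)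
               \<longlonglongrightarrow> max (\<beta> * u + ln (real d1)) (ln (real d)))
            \<and> fDet d d1 \<beta> u = max (\<beta> * u + ln (real d1)) (ln (real d)))
       \<and> (\<forall>\<beta>. \<beta> > 0 \<longrightarrow> ucDet d d1 \<beta> = ereal (ln (real d / real d1) / \<beta>))
       \<and> ucDet d d1 0 = \<infinity>"
proof -
  have f: "fDet d d1 \<beta> u = max (\<beta> * u + ln (real d1)) (ln (real d))" for \<beta> u
    unfolding fDet_def using main_limit[OF assms] by (rule limI)
  have P1: "\<forall>\<beta> u. \<beta> \<ge> 0 \<longrightarrow>
            ((\<lambda>n. ln (ZDet d d1 \<beta> u n) / real n)
               \<longlonglongrightarrow> max (\<beta> * u + ln (real d1)) (ln (real d)))
            \<and> fDet d d1 \<beta> u = max (\<beta> * u + ln (real d1)) (ln (real d))"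
    by (intro allI impI conjI main_limit[OF assms] f)
  have lnd: "ln (real d / real d1) = ln (real d) - ln (real d1)" using assms by (simp add: ln_div)
  have P2: "ucDet d d1 \<beta> = ereal (ln (real d / real d1) / \<beta>)" if b: "\<beta> > 0" for \<beta>
  proof -
    define c where "c = ln (real d / real d1) / \<beta>"
    have iff: "fDet d d1 \<beta> u > ln (real d) \<longleftrightarrow> u > c" for u
    proof -
      have e1: "fDet d d1 \<beta> u > ln (real d) \<longleftrightarrow> \<beta> * u + ln (real d1) > ln (real d)"
        unfolding f by (rule less_max_iff_disj[THEN trans]) simp
      have e2: "u > c \<longleftrightarrow> ln (real d / real d1) < u * \<beta>"
        unfolding c_def using b by (rule pos_divide_less_eq)
      have e3: "u * \<beta> = \<beta> * u" by simp
      show ?thesis using e1 e2 e3 lnd by linarith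
    qed
    have "{u. fDet d d1 \<beta> u > ln (real d)} = {c<..}"
      using iff by auto
    then have "ucDet d d1 \<beta> = (INF u\<in>{c<..}. ereal u)" by (simp add: ucDet_def)
    also have "\<dots> = ereal (Inf {c<..})"
      by (rule ereal_Inf'[symmetric]) auto
    finally show ?thesis by (simp add: c_def)
  qed
  have P3: "ucDet d d1 0 = \<infinity>"
  proof -
    have lt: "ln (real d1) < ln (real d)" using assms by simp
    have "\<not> fDet d d1 0 u > ln (real d)" for u
      unfolding f using lt by simp
    then have "{u. fDet d d1 0 u > ln (real d)} = {}" by blast
    then show ?thesis by (simp add: ucDet_def top_ereal_def)
  qed
  show ?thesis using P1 P2 P3 by blast
qed

end
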